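(* Let $t\ge 2$ and $k\ge 2$ be integers. Then there is a constant $c_{t,k}>0$ depending only on $t$ and $k$ such that for all sufficiently large $n$, \[ \operatorname{br}_k(C_{2t};K_{n,n}) \le \frac{c_{t,k}\, n^2}{\log^2 n}. \]
   Context: $C_{2t}$ denotes the cycle of length $2t$ and $K_{n,n}$ the complete bipartite graph with both parts of size $n$. For bipartite graphs $G_1,G_2$ and an integer $k\ge1$, the multicolor bipartite Ramsey number $\operatorname{br}_k(G_1;G_2)$ is the least integer $N$ such that every coloring of the edges of $K_{N,N}$ with $k+1$ colors $1,\dots,k+1$ contains a monochromatic copy of $G_1$ in one of the colors $1,\dots,k$ or a monochromatic copy of $G_2$ in color $k+1$. Rounding is ignored. *)

theory Defs
  imports Complex_Main
begin

text \<open>K_{N,N}: left vertices 0..N-1, right vertices 0..N-1; an edge colouring is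
  col :: nat => nat => nat, where col i j is the colour of the edge (left i, right j).\<close>

definition has_mono_cycle :: "nat \<Rightarrow> (nat \<Rightarrow> nat \<Rightarrow> nat) \<Rightarrow> nat \<Rightarrow> nat \<Rightarrow> bool" where
  "has_mono_cycle N col c t \<longleftrightarrow>
     (\<exists>a b :: nat \<Rightarrow> nat. inj_on a {0..<t} \<and> inj_on b {0..<t} \<and>
        a ` {0..<t} \<subseteq> {0..<N} \<and> b ` {0..<t} \<subseteq> {0..<N} \<and>
        (\<forall>i<t. col (a i) (b i) = c \<and> col (a ((i + 1) mod t)) (b i) = c))"

text \<open>Monochromatic copy of K_{n,n} in colour c (any copy of a connected bipartite
  graph in K_{N,N} respects the bipartition).\<close>
definition has_mono_Knn :: "nat \<Rightarrow> (nat \<Rightarrow> nat \<Rightarrow> nat) \<Rightarrow> nat \<Rightarrow> nat \<Rightarrow> bool" where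
  "has_mono_Knn N col c n \<longleftrightarrow>
     (\<exists>A B. A \<subseteq> {0..<N} \<and> B \<subseteq> {0..<N} \<and> card A = n \<and> card B = n \<and>
        (\<forall>x\<in>A. \<forall>y\<in>B. col x y = c))"

definition br_cycle_Knn :: "nat \<Rightarrow> nat \<Rightarrow> nat \<Rightarrow> nat" where
  "br_cycle_Knn k t n = (LEAST N. \<forall>col :: nat \<Rightarrow> nat \<Rightarrow> nat.
      (\<forall>i<N. \<forall>j<N. col i j \<in> {1..k+1}) \<longrightarrow>
      (\<exists>c\<in>{1..k}. has_mono_cycle N col c t) \<or> has_mono_Knn N col (k + 1) n)"

end

theory Submission
  imports Defs "HOL-Real_Asymp.Real_Asymp"
begin


lemma card_edges_sum:
  assumes "finite X" "finite Y"
  shows "card {(x,y) \<in> X \<times> Y. R x y} = (\<Sum>y\<in>Y. card {x\<in>X. R x y})"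
proof -
  have "{(x,y) \<in> X \<times> Y. R x y} = (\<Union>y\<in>Y. (\<lambda>x. (x,y)) ` {x\<in>X. R x y})" by auto
  moreover have "card (\<Union>y\<in>Y. (\<lambda>x. (x,y)) ` {x\<in>X. R x y}) = (\<Sum>y\<in>Y. card ((\<lambda>x. (x,y)) ` {x\<in>X. R x y}))"
    by (rule card_UN_disjoint) (use assms in auto)
  moreover have "\<And>y. card ((\<lambda>x. (x,y)) ` {x\<in>X. R x y}) = card {x\<in>X. R x y}"
    by (rule card_image) (auto simp: inj_on_def)
  ultimately show ?thesis by simp
qed

lemma card_edges_sum2:
  assumes "finite X" "finite Y"
  shows "card {(x,y) \<in> X \<times> Y. R x y} = (\<Sum>x\<in>X. card {y\<in>Y. R x y})"
proof -
  have "{(x,y) \<in> X \<times> Y. R x y} = (\<Union>x\<in>X. (\<lambda>y. (x,y)) ` {y\<in>Y. R x y})" by auto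
  moreover have "card (\<Union>x\<in>X. (\<lambda>y. (x,y)) ` {y\<in>Y. R x y}) = (\<Sum>x\<in>X. card ((\<lambda>y. (x,y)) ` {y\<in>Y. R x y}))"
    by (rule card_UN_disjoint) (use assms in auto)
  moreover have "\<And>x. card ((\<lambda>y. (x,y)) ` {y\<in>Y. R x y}) = card {y\<in>Y. R x y}"
    by (rule card_image) (auto simp: inj_on_def)
  ultimately show ?thesis by simp
qed

lemma mindeg_sub:
  fixes R :: "nat \<Rightarrow> nat \<Rightarrow> bool" and d :: nat
  shows "finite X \<Longrightarrow> finite Y \<Longrightarrow> card {(x,y) \<in> X \<times> Y. R x y} > d * (card X + card Y) \<Longrightarrow>
    \<exists>X' \<subseteq> X. \<exists>Y' \<subseteq> Y. X' \<noteq> {} \<and> Y' \<noteq> {} \<and> (\<forall>x\<in>X'. card {y\<in>Y'. R x y} \<ge> d)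
      \<and> (\<forall>y\<in>Y'. card {x\<in>X'. R x y} \<ge> d)"
proof (induction "card X + card Y" arbitrary: X Y rule: less_induct)
  case less
  show ?case
  proof (cases "\<exists>x\<in>X. card {y\<in>Y. R x y} < d")
    case True
    then obtain x0 where x: "x0 \<in> X" "card {y\<in>Y. R x0 y} < d" by blast
    have "card {(x,y) \<in> X \<times> Y. R x y} = (\<Sum>x\<in>X. card {y\<in>Y. R x y})"
      using less.prems(1,2) by (rule card_edges_sum2)
    also have "\<dots> = card {y\<in>Y. R x0 y} + (\<Sum>x\<in>X-{x0}. card {y\<in>Y. R x y})"
      using x less.prems by (simp add: sum.remove)
    also have "(\<Sum>x\<in>X-{x0}. card {y\<in>Y. R x y}) = card {(x,y) \<in> (X-{x0}) \<times> Y. R x y}"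
      by (subst card_edges_sum2[of "X-{x0}" Y R]) (use less.prems in auto)
    finally have e: "card {(x,y) \<in> X \<times> Y. R x y} = card {y\<in>Y. R x0 y} + card {(x,y) \<in> (X-{x0}) \<times> Y. R x y}" .
    have cX: "card X = card (X-{x0}) + 1" using x less.prems by (metis Suc_eq_plus1 card_Suc_Diff1)
    have "card {(x,y) \<in> (X-{x0}) \<times> Y. R x y} > d * (card (X-{x0}) + card Y)"
      using e cX x(2) less.prems(3) by (simp add: algebra_simps)
    then obtain X' Y' where "X' \<subseteq> X-{x0}" "Y' \<subseteq> Y" "X' \<noteq> {} \<and> Y' \<noteq> {} \<and> (\<forall>x\<in>X'. card {y\<in>Y'. R x y} \<ge> d)
      \<and> (\<forall>y\<in>Y'. card {x\<in>X'. R x y} \<ge> d)"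
      using less.hyps[of "X-{x0}" Y] cX less.prems by auto
    then show ?thesis by blast
  next
    case False
    show ?thesis
    proof (cases "\<exists>y\<in>Y. card {x\<in>X. R x y} < d")
      case True
      then obtain y0 where y: "y0 \<in> Y" "card {x\<in>X. R x y0} < d" by blast
      have "card {(x,y) \<in> X \<times> Y. R x y} = (\<Sum>y\<in>Y. card {x\<in>X. R x y})"
        using less.prems(1,2) by (rule card_edges_sum)
      also have "\<dots> = card {x\<in>X. R x y0} + (\<Sum>y\<in>Y-{y0}. card {x\<in>X. R x y})"
        using y less.prems by (simp add: sum.remove)
      also have "(\<Sum>y\<in>Y-{y0}. card {x\<in>X. R x y}) = card {(x,y) \<in> X \<times> (Y-{y0}). R x y}"
        by (subst card_edges_sum[of X "Y-{y0}" R]) (use less.prems in auto)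
      finally have e: "card {(x,y) \<in> X \<times> Y. R x y} = card {x\<in>X. R x y0} + card {(x,y) \<in> X \<times> (Y-{y0}). R x y}" .
      have cY: "card Y = card (Y-{y0}) + 1" using y less.prems by (metis Suc_eq_plus1 card_Suc_Diff1)
      have "card {(x,y) \<in> X \<times> (Y-{y0}). R x y} > d * (card X + card (Y-{y0}))"
        using e cY y(2) less.prems(3) by (simp add: algebra_simps)
      then obtain X' Y' where "X' \<subseteq> X" "Y' \<subseteq> Y-{y0}" "X' \<noteq> {} \<and> Y' \<noteq> {} \<and> (\<forall>x\<in>X'. card {y\<in>Y'. R x y} \<ge> d)
        \<and> (\<forall>y\<in>Y'. card {x\<in>X'. R x y} \<ge> d)"
        using less.hyps[of X "Y-{y0}"] cY less.prems by auto
      then show ?thesis by blast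
    next
      case False2: False
      have "{(x,y) \<in> X \<times> Y. R x y} \<noteq> {}" using less.prems(3) by (metis card.empty not_less0)
      then have "X \<noteq> {}" "Y \<noteq> {}" by auto
      then show ?thesis using False False2
        apply -
        apply (rule exI[of _ X], rule conjI, simp)
        apply (rule exI[of _ Y], rule conjI, simp)
        by (auto simp: not_less)
    qed
  qed
qed

lemma path_build:
  fixes R :: "nat \<Rightarrow> nat \<Rightarrow> bool"
  assumes fin: "finite X2" "finite Y2" and ne: "Y2 \<noteq> {}"
    and dX: "\<forall>x\<in>X2. card {y\<in>Y2. R x y} \<ge> t" and dY: "\<forall>y\<in>Y2. card {x\<in>X2. R x y} \<ge> t"
  shows "Suc m \<le> t \<Longrightarrow> \<exists>a b. b ` {0..m} \<subseteq> Y2 \<and> a ` {1..m} \<subseteq> X2 \<and> inj_on b {0..m} \<and> inj_on a {1..m}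
     \<and> (\<forall>i. 1 \<le> i \<and> i \<le> m \<longrightarrow> R (a i) (b (i-1)) \<and> R (a i) (b i))"
proof (induction m)
  case 0
  obtain y where "y \<in> Y2" using ne by blast
  then show ?case by (intro exI[of _ "\<lambda>_. 0"] exI[of _ "\<lambda>_. y"]) auto
next
  case (Suc m)
  then obtain a b where ab: "b ` {0..m} \<subseteq> Y2" "a ` {1..m} \<subseteq> X2" "inj_on b {0..m}" "inj_on a {1..m}"
     "\<forall>i. 1 \<le> i \<and> i \<le> m \<longrightarrow> R (a i) (b (i-1)) \<and> R (a i) (b i)" by auto
  have bm: "b m \<in> Y2" using ab(1) by auto
  have "card (a ` {1..m}) \<le> m" using card_image_le[of "{1..m}" a] by simp
  also have "m < card {x\<in>X2. R x (b m)}" using dY bm Suc.prems by fastforce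
  finally have "\<not> {x\<in>X2. R x (b m)} \<subseteq> a ` {1..m}"
    using card_mono[OF finite_imageI[OF finite_atLeastAtMost]] by (metis not_less)
  then obtain x where x: "x \<in> X2" "R x (b m)" "x \<notin> a ` {1..m}" by blast
  have "card (b ` {0..m}) \<le> Suc m" using card_image_le[of "{0..m}" b] by simp
  also have "Suc m < card {y\<in>Y2. R x y}" using dX x Suc.prems by fastforce
  finally have "\<not> {y\<in>Y2. R x y} \<subseteq> b ` {0..m}"
    using card_mono[OF finite_imageI[OF finite_atLeastAtMost]] by (metis not_less)
  then obtain y where y: "y \<in> Y2" "R x y" "y \<notin> b ` {0..m}" by blast
  have e1: "{0..Suc m} = insert (Suc m) {0..m}" by auto
  have e2: "{1..Suc m} = insert (Suc m) {1..m}" by auto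
  show ?case
  proof (rule exI[of _ "a(Suc m := x)"], rule exI[of _ "b(Suc m := y)"], intro conjI)
    show "(b(Suc m := y)) ` {0..Suc m} \<subseteq> Y2" using ab(1) y(1) unfolding e1 by auto
    show "(a(Suc m := x)) ` {1..Suc m} \<subseteq> X2" using ab(2) x(1) unfolding e2 by auto
    show "inj_on (b(Suc m := y)) {0..Suc m}" unfolding e1 using ab(3) y(3)
      by (simp add: inj_on_fun_updI)
    show "inj_on (a(Suc m := x)) {1..Suc m}" unfolding e2 using ab(4) x(3)
      by (simp add: inj_on_fun_updI)
    show "\<forall>i. 1 \<le> i \<and> i \<le> Suc m \<longrightarrow> R ((a(Suc m := x)) i) ((b(Suc m := y)) (i - 1)) \<and> R ((a(Suc m := x)) i) ((b(Suc m := y)) i)"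
    proof (intro allI impI)
      fix i assume i: "1 \<le> i \<and> i \<le> Suc m"
      show "R ((a(Suc m := x)) i) ((b(Suc m := y)) (i - 1)) \<and> R ((a(Suc m := x)) i) ((b(Suc m := y)) i)"
      proof (cases "i = Suc m")
        case True then show ?thesis using x y by simp
      next
        case False then show ?thesis using ab(5) i by auto
      qed
    qed
  qed
qed


lemma few_edges:
  fixes col :: "nat \<Rightarrow> nat \<Rightarrow> nat" and c t N d1 :: nat
  assumes t2: "t \<ge> 2" and nc: "\<not> has_mono_cycle N col c t"
    and dd: "(d1 - 1 - t) * d1 > t * N" and d1t: "d1 > t + 1"
  shows "card {(x,y) \<in> {0..<N} \<times> {0..<N}. col x y = c} \<le> d1 * (N + N)"
proof (rule ccontr)
  define R where "R = (\<lambda>x y. col x y = c)"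
  assume "\<not> ?thesis"
  then have "card {(x,y) \<in> {0..<N} \<times> {0..<N}. R x y} > d1 * (card {0..<N} + card {0..<N})"
    by (simp add: R_def)
  from mindeg_sub[OF _ _ this] obtain X' Y' where XY: "X' \<subseteq> {0..<N}" "Y' \<subseteq> {0..<N}" "X' \<noteq> {}" "Y' \<noteq> {}"
    "\<forall>x\<in>X'. card {y\<in>Y'. R x y} \<ge> d1" "\<forall>y\<in>Y'. card {x\<in>X'. R x y} \<ge> d1" by auto
  have finX': "finite X'" "finite Y'" using XY(1,2) finite_subset by auto
  obtain v where v: "v \<in> X'" using XY(3) by blast
  define S where "S = {y\<in>Y'. R v y}"
  define X2 where "X2 = X' - {v}"
  have cS: "card S \<ge> d1" using XY(5) v S_def by auto
  have finS: "finite S" "finite X2" using finX' S_def X2_def by auto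
  have "X2 \<subseteq> {0..<N}" using XY(1) X2_def by auto
  then have cX2: "card X2 \<le> N" using card_mono[OF finite_atLeastLessThan, of X2 0 N] by simp
  have degS: "card {x\<in>X2. R x y} \<ge> d1 - 1" if "y \<in> S" for y
  proof -
    have "{x\<in>X'. R x y} \<subseteq> insert v {x\<in>X2. R x y}" using X2_def by auto
    then have "card {x\<in>X'. R x y} \<le> card (insert v {x\<in>X2. R x y})"
      by (intro card_mono) (use finS in auto)
    also have "\<dots> \<le> Suc (card {x\<in>X2. R x y})" by (simp add: card_insert_le_m1)
    finally show ?thesis using XY(6) that S_def by fastforce
  qed
  have "card {(x,y) \<in> X2 \<times> S. R x y} = (\<Sum>y\<in>S. card {x\<in>X2. R x y})"
    using finS by (intro card_edges_sum) auto
  also have "\<dots> \<ge> (\<Sum>y\<in>S. d1 - 1)" using degS by (intro sum_mono) auto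
  finally have E2: "card {(x,y) \<in> X2 \<times> S. R x y} \<ge> card S * (d1 - 1)" by simp
  have "card S * (d1 - 1) = card S * (d1 - 1 - t) + card S * t" using d1t
    by (metis add_mult_distrib2 le_add_diff_inverse2 less_diff_conv less_imp_le_nat)
  moreover have m: "d1 * (d1 - 1 - t) \<le> card S * (d1 - 1 - t)" using cS by (rule mult_right_mono) simp
  have "t * N < card S * (d1 - 1 - t)" using dd m by (metis mult.commute order_less_le_trans)
  ultimately have "card S * (d1 - 1) > t * N + card S * t" by linarith
  then have "card {(x,y) \<in> X2 \<times> S. R x y} > t * (card X2 + card S)"
  proof -
    have "t * (card X2 + card S) \<le> t * N + card S * t" using cX2 by (simp add: algebra_simps)
    then show ?thesis using E2 \<open>card S * (d1 - 1) > t * N + card S * t\<close> by linarith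
  qed
  from mindeg_sub[OF finS(2) finS(1) this] obtain X3 Y3 where XY3: "X3 \<subseteq> X2" "Y3 \<subseteq> S" "X3 \<noteq> {}" "Y3 \<noteq> {}"
    "\<forall>x\<in>X3. card {y\<in>Y3. R x y} \<ge> t" "\<forall>y\<in>Y3. card {x\<in>X3. R x y} \<ge> t" by auto
  have fin3: "finite X3" "finite Y3" using XY3(1,2) finS finite_subset by auto
  have "Suc (t - 1) \<le> t" using t2 by simp
  from path_build[OF fin3 XY3(4) XY3(5) XY3(6) this] obtain a b where ab:
    "b ` {0..t-1} \<subseteq> Y3" "a ` {1..t-1} \<subseteq> X3" "inj_on b {0..t-1}" "inj_on a {1..t-1}"
    "\<forall>i. 1 \<le> i \<and> i \<le> t - 1 \<longrightarrow> R (a i) (b (i-1)) \<and> R (a i) (b i)" by blast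
  define a' where "a' = a(0 := v)"
  have e0: "{0..<t} = {0..t-1}" using t2 by auto
  have e1: "{0..<t} = insert 0 {1..t-1}" using t2 by auto
  have bS: "b i \<in> S" if "i < t" for i
  proof -
    have "i \<in> {0..t-1}" using that by simp
    then show ?thesis using ab(1) XY3(2) by blast
  qed
  have aX: "a i \<in> X2" if "1 \<le> i" "i < t" for i
  proof -
    have "i \<in> {1..t-1}" using that by simp
    then show ?thesis using ab(2) XY3(1) by blast
  qed
  have "has_mono_cycle N col c t"
    unfolding has_mono_cycle_def
  proof (rule exI[of _ a'], rule exI[of _ b], intro conjI)
    show "inj_on a' {0..<t}" unfolding e1 a'_def
    proof (rule inj_on_insert[THEN iffD2], rule conjI)
      show "inj_on (a(0 := v)) {1..t - 1}" using ab(4) by (simp add: inj_on_def)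
      show "(a(0 := v)) 0 \<notin> a(0 := v) ` ({1..t - 1} - {0})"
      proof
        assume "(a(0 := v)) 0 \<in> a(0 := v) ` ({1..t - 1} - {0})"
        then obtain i where i: "i \<in> {1..t-1}" "v = a i" by auto
        then have "a i \<in> X2" using aX[of i] t2 by auto
        then show False using i X2_def by auto
      qed
    qed
    show "inj_on b {0..<t}" using ab(3) e0 by simp
    show "a' ` {0..<t} \<subseteq> {0..<N}" using aX X2_def XY(1) v unfolding a'_def by (auto simp: e1)
    show "b ` {0..<t} \<subseteq> {0..<N}" using bS S_def XY(2) by auto
    show "\<forall>i<t. col (a' i) (b i) = c \<and> col (a' ((i + 1) mod t)) (b i) = c"
    proof (intro allI impI conjI)
      fix i assume i: "i < t"
      show "col (a' i) (b i) = c"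
      proof (cases "i = 0")
        case True then show ?thesis using bS[OF i] S_def R_def a'_def by simp
      next
        case False then show ?thesis using ab(5) i R_def a'_def by auto
      qed
      show "col (a' ((i + 1) mod t)) (b i) = c"
      proof (cases "i + 1 < t")
        case True then show ?thesis using ab(5)[rule_format, of "i+1"] R_def a'_def by auto
      next
        case False then have "i + 1 = t" using i by simp
        then show ?thesis using bS[OF i] S_def R_def a'_def by simp
      qed
    qed
  qed
  with nc show False by simp
qed

lemma greedy:
  fixes H :: "nat \<Rightarrow> nat \<Rightarrow> bool" and N :: nat and D :: real and Y0 :: "nat set"
  assumes Y0: "Y0 \<subseteq> {0..<N}" and deg: "\<forall>y\<in>Y0. real (card {x\<in>{0..<N}. H x y}) \<le> D"
    and DN: "2*D \<le> real N" and D0: "D \<ge> 0"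
  shows "2*j \<le> N \<Longrightarrow> \<exists>A B. A \<subseteq> {0..<N} \<and> card A = j \<and> B \<subseteq> Y0 \<and> (\<forall>x\<in>A. \<forall>y\<in>B. \<not> H x y)
      \<and> real (card B) \<ge> real (card Y0) * (1 - 2*D/N)^j"
proof (induction j)
  case 0
  show ?case by (rule exI[of _ "{}"], rule exI[of _ Y0]) simp
next
  case (Suc j)
  have "2*j \<le> N" using Suc.prems by simp
  then obtain A B where AB: "A \<subseteq> {0..<N}" "card A = j" "B \<subseteq> Y0" "\<forall>x\<in>A. \<forall>y\<in>B. \<not> H x y"
      "real (card B) \<ge> real (card Y0) * (1 - 2*D/N)^j" using Suc.IH by blast
  define Rm where "Rm = {0..<N} - A"
  have finB: "finite B" using AB(3) Y0 by (meson finite_atLeastLessThan finite_subset)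
  have finR: "finite Rm" using Rm_def by simp
  have cR: "card Rm = N - j" using AB(1,2) Rm_def by (simp add: card_Diff_subset finite_subset)
  have cR2: "real (card Rm) \<ge> real N / 2" "card Rm > 0" using cR Suc.prems by auto
  then have Rne: "Rm \<noteq> {}" by auto
  have "(\<Sum>x\<in>Rm. real (card {y\<in>B. H x y})) = real (card {(x,y) \<in> Rm \<times> B. H x y})"
    using card_edges_sum2[OF finR finB, of H] by simp
  also have "\<dots> = (\<Sum>y\<in>B. real (card {x\<in>Rm. H x y}))"
    using card_edges_sum[OF finR finB, of H] by simp
  also have "\<dots> \<le> (\<Sum>y\<in>B. D)"
  proof (rule sum_mono)
    fix y assume y: "y \<in> B"
    have "card {x\<in>Rm. H x y} \<le> card {x\<in>{0..<N}. H x y}" by (rule card_mono) (auto simp: Rm_def)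
    then show "real (card {x\<in>Rm. H x y}) \<le> D" using deg y AB(3) by force
  qed
  also have "\<dots> = real (card B) * D" by simp
  finally have sumle: "(\<Sum>x\<in>Rm. real (card {y\<in>B. H x y})) \<le> real (card B) * D" .
  have "\<exists>x\<in>Rm. real (card {y\<in>B. H x y}) \<le> real (card B) * D / real (card Rm)"
  proof (rule ccontr)
    assume "\<not> ?thesis"
    then have "\<forall>x\<in>Rm. real (card B) * D / real (card Rm) < real (card {y\<in>B. H x y})" by auto
    then have "(\<Sum>x\<in>Rm. real (card B) * D / real (card Rm)) < (\<Sum>x\<in>Rm. real (card {y\<in>B. H x y}))"
      using finR Rne by (intro sum_strict_mono) auto
    then show False using sumle cR2 by simp
  qed
  then obtain x where x: "x \<in> Rm" "real (card {y\<in>B. H x y}) \<le> real (card B) * D / real (card Rm)" by blast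
  have "real (card B) * D / real (card Rm) \<le> real (card B) * D / (real N / 2)"
    using cR2 D0 Suc.prems by (intro divide_left_mono) auto
  also have "real (card B) * D / (real N / 2) = real (card B) * (2 * D / N)" by simp
  finally have fx: "real (card {y\<in>B. H x y}) \<le> real (card B) * (2 * D / N)" using x(2) by linarith
  define B' where "B' = {y\<in>B. \<not> H x y}"
  have "card B = card (B' \<union> {y\<in>B. H x y})" by (rule arg_cong[where f=card]) (auto simp: B'_def)
  also have "\<dots> = card B' + card {y\<in>B. H x y}" by (rule card_Un_disjoint) (use finB in \<open>auto simp: B'_def\<close>)
  finally have "card B = card B' + card {y\<in>B. H x y}" .
  then have "real (card B') \<ge> real (card B) * (1 - 2 * D / N)" using fx by (simp add: algebra_simps)
  moreover have "1 - 2 * D / N \<ge> 0" using DN cR2 by (cases "N = 0") (auto simp: field_simps)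
  moreover have "real (card B) * (1 - 2 * D / N) \<ge> real (card Y0) * (1 - 2*D/N)^j * (1 - 2 * D / N)"
    using AB(5) \<open>1 - 2 * D / N \<ge> 0\<close> by (rule mult_right_mono)
  ultimately have "real (card B') \<ge> real (card Y0) * (1 - 2*D/N)^j * (1 - 2 * D / N)"
    by linarith
  then have cB': "real (card B') \<ge> real (card Y0) * (1 - 2*D/N)^(Suc j)" by (simp add: ac_simps)
  show ?case
  proof (rule exI[of _ "insert x A"], rule exI[of _ B'], intro conjI)
    show "insert x A \<subseteq> {0..<N}" using AB(1) x(1) Rm_def by auto
    show "card (insert x A) = Suc j" using AB(1,2) x(1) Rm_def by (simp add: finite_subset)
    show "B' \<subseteq> Y0" using AB(3) B'_def by auto
    show "\<forall>xa\<in>insert x A. \<forall>y\<in>B'. \<not> H xa y" using AB(4) B'_def by auto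
  qed (rule cB')
qed


lemma goodN:
  fixes k t N n d1 :: nat
  assumes t2: "t \<ge> 2" and k1: "k \<ge> 1" and N0: "N > 0" and dd: "(d1 - 1 - t) * d1 > t * N"
    and d1t: "d1 > t + 1" and DN: "2 * real (4*k*d1) \<le> real N" and nN: "2*n \<le> N"
    and big: "real N / 2 * (1 - 2 * real (4*k*d1) / N)^n \<ge> real n"
  shows "\<forall>col. (\<forall>i<N. \<forall>j<N. col i j \<in> {1..k+1}) \<longrightarrow>
      (\<exists>c\<in>{1..k}. has_mono_cycle N col c t) \<or> has_mono_Knn N col (k + 1) n"
proof (intro allI impI)
  fix col :: "nat \<Rightarrow> nat \<Rightarrow> nat"
  assume colr: "\<forall>i<N. \<forall>j<N. col i j \<in> {1..k+1}"
  show "(\<exists>c\<in>{1..k}. has_mono_cycle N col c t) \<or> has_mono_Knn N col (k + 1) n"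
  proof (cases "\<exists>c\<in>{1..k}. has_mono_cycle N col c t")
    case True then show ?thesis by blast
  next
    case False
    define H where "H = (\<lambda>x y. col x y \<noteq> k + 1)"
    define D where "D = real (4*k*d1)"
    have Ec: "card {(x,y) \<in> {0..<N} \<times> {0..<N}. col x y = c} \<le> d1 * (N + N)" if "c \<in> {1..k}" for c
      using few_edges[OF t2 _ dd d1t] False that by blast
    have "{(x,y) \<in> {0..<N} \<times> {0..<N}. H x y} \<subseteq> (\<Union>c\<in>{1..k}. {(x,y) \<in> {0..<N} \<times> {0..<N}. col x y = c})"
      using colr by (force simp: H_def)
    then have "card {(x,y) \<in> {0..<N} \<times> {0..<N}. H x y} \<le> card (\<Union>c\<in>{1..k}. {(x,y) \<in> {0..<N} \<times> {0..<N}. col x y = c})"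
    proof (rule card_mono[rotated])
      have "(\<Union>c\<in>{1..k}. {(x,y) \<in> {0..<N} \<times> {0..<N}. col x y = c}) \<subseteq> {0..<N} \<times> {0..<N}" by auto
      then show "finite (\<Union>c\<in>{1..k}. {(x,y) \<in> {0..<N} \<times> {0..<N}. col x y = c})"
        by (rule finite_subset) simp
    qed
    also have "\<dots> \<le> (\<Sum>c\<in>{1..k}. card {(x,y) \<in> {0..<N} \<times> {0..<N}. col x y = c})"
      by (rule card_UN_le) simp
    also have "\<dots> \<le> (\<Sum>c\<in>{1..k}. d1 * (N + N))" using Ec by (intro sum_mono) auto
    also have "\<dots> = k * (d1 * (N + N))" by simp
    finally have Eall: "card {(x,y) \<in> {0..<N} \<times> {0..<N}. H x y} \<le> k * (d1 * (N + N))" .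
    define deg where "deg = (\<lambda>y. card {x\<in>{0..<N}. H x y})"
    have sdeg: "(\<Sum>y\<in>{0..<N}. deg y) \<le> k * (d1 * (N + N))"
      using Eall card_edges_sum[of "{0..<N}" "{0..<N}" H] unfolding deg_def by simp
    define Z where "Z = {y\<in>{0..<N}. real (deg y) > D}"
    define Y0 where "Y0 = {y\<in>{0..<N}. real (deg y) \<le> D}"
    have Dpos: "D > 0" using k1 d1t D_def by simp
    have "real (card Z) * D = (\<Sum>y\<in>Z. D)" by simp
    also have "\<dots> \<le> (\<Sum>y\<in>Z. real (deg y))" by (intro sum_mono) (auto simp: Z_def)
    also have "\<dots> \<le> (\<Sum>y\<in>{0..<N}. real (deg y))" by (intro sum_mono2) (auto simp: Z_def)
    also have "\<dots> = real (\<Sum>y\<in>{0..<N}. deg y)" by simp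
    also have "\<dots> \<le> real (k * (d1 * (N + N)))" using sdeg by linarith
    also have "\<dots> = D * real N / 2" by (simp add: D_def)
    finally have "real (card Z) * D \<le> D * real N / 2" .
    then have cZ: "real (card Z) \<le> real N / 2" using Dpos by (simp add: field_simps)
    have "card Y0 + card Z = N"
    proof -
      have "card Y0 + card Z = card (Y0 \<union> Z)" by (rule card_Un_disjoint[symmetric]) (auto simp: Y0_def Z_def)
      also have "Y0 \<union> Z = {0..<N}" by (auto simp: Y0_def Z_def)
      finally show ?thesis by simp
    qed
    then have cY0: "real (card Y0) \<ge> real N / 2" using cZ by linarith
    have "2 * n \<le> N" by (rule nN)
    moreover have "Y0 \<subseteq> {0..<N}" by (auto simp: Y0_def)
    moreover have "\<forall>y\<in>Y0. real (card {x\<in>{0..<N}. H x y}) \<le> D" by (auto simp: Y0_def deg_def)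
    moreover have "2 * D \<le> real N" using DN by (simp add: D_def)
    moreover have "D \<ge> 0" using Dpos by simp
    ultimately obtain A B where AB: "A \<subseteq> {0..<N}" "card A = n" "B \<subseteq> Y0"
      "\<forall>x\<in>A. \<forall>y\<in>B. \<not> H x y" "real (card B) \<ge> real (card Y0) * (1 - 2*D/N)^n"
      using greedy[of Y0 N H D n] by blast
    have q0: "(1 - 2*D/N) \<ge> 0" using DN N0 D_def by (simp add: field_simps)
    have "real (card Y0) * (1 - 2*D/N)^n \<ge> real N / 2 * (1 - 2*D/N)^n"
      using cY0 q0 by (intro mult_right_mono) auto
    moreover have "real n \<le> real N / 2 * (1 - 2*D/N)^n" using big by (simp add: D_def)
    ultimately have "real (card B) \<ge> real n" using AB(5) by linarith
    then have "n \<le> card B" by simp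
    then obtain B' where B': "B' \<subseteq> B" "card B' = n" by (meson obtain_subset_with_card_n)
    have "has_mono_Knn N col (k + 1) n"
      unfolding has_mono_Knn_def
      using AB B' by (intro exI[of _ A] exI[of _ B']) (auto simp: Y0_def H_def)
    then show ?thesis by blast
  qed
qed


lemma pow_exp_bound:
  fixes x :: real
  assumes "0 \<le> x" "x \<le> 1/2"
  shows "(1 - x)^n \<ge> exp (- 3 * x * n)"
proof -
  have "ln (1 - x) \<ge> - x - 2 * x^2" using ln_one_minus_pos_lower_bound[OF assms] by simp
  moreover have "x^2 \<le> x" using assms unfolding power2_eq_square by (intro mult_left_le) auto
  ultimately have l: "ln (1 - x) \<ge> - 3 * x" by linarith
  have "(1 - x)^n = exp (ln (1 - x))^n" using assms by simp
  also have "\<dots> = exp (real n * ln (1 - x))" by (simp add: exp_of_nat_mult)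
  also have "\<dots> \<ge> exp (- 3 * x * n)" using mult_left_mono[OF l, of "real n"] by (simp add: algebra_simps)
  finally show ?thesis .
qed

lemma lim1: "filterlim (\<lambda>x::real. x / ln x ^ 2) at_top at_top" by real_asymp
lemma lim2: "((\<lambda>x::real. ln x ^ 2 / sqrt x) \<longlongrightarrow> 0) at_top" by real_asymp

lemma ev_conds:
  fixes K :: real
  shows "\<forall>\<^sub>F n in sequentially. n \<ge> 2 \<and> real n / ln (real n)^2 \<ge> K \<and> ln (real n)^2 / sqrt (real n) \<le> 1"
proof -
  have "\<forall>\<^sub>F x in at_top. x / ln x ^ 2 \<ge> K" using lim1 by (simp add: filterlim_at_top)
  moreover have "\<forall>\<^sub>F x in at_top. ln x ^ 2 / sqrt x < 1" using lim2 by (rule order_tendstoD) simp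
  ultimately have "\<forall>\<^sub>F x in at_top. x / ln x ^ 2 \<ge> K \<and> ln x ^ 2 / sqrt x \<le> 1"
    by eventually_elim auto
  then have "\<forall>\<^sub>F n in sequentially. real n / ln (real n) ^ 2 \<ge> K \<and> ln (real n) ^ 2 / sqrt (real n) \<le> 1"
    by (rule eventually_compose_filterlim[OF _ filterlim_real_sequentially])
  moreover have "\<forall>\<^sub>F n in sequentially. n \<ge> (2::nat)" by (simp add: eventually_ge_at_top)
  ultimately show ?thesis by eventually_elim auto
qed


lemma bound_n:
  fixes k t n :: nat
  assumes t2: "t \<ge> 2" and k2: "k \<ge> 2" and n2: "n \<ge> 2"
    and g: "real n / ln (real n)^2 \<ge> max ((real t + 3)^2) (16 * (8*real k*real t)^2)"
    and h: "ln (real n)^2 / sqrt (real n) \<le> 1"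
  shows "real (br_cycle_Knn k t n) \<le> 2*(144*(8*real k*real t)^2) * real n^2 / ln (real n)^2"
proof -
  define \<beta> where "\<beta> = 8*real k*real t"
  define C where "C = 144*\<beta>^2"
  define L where "L = ln (real n)"
  have L0: "L > 0" using n2 L_def by simp
  have kt: "real k * real t \<ge> 4" using k2 t2 mult_mono[of 2 "real k" 2 "real t"] by simp
  have b0: "\<beta> \<ge> 32" using kt \<beta>_def by simp
  have "\<beta> * \<beta> \<ge> 32 * 32" using b0 mult_mono[of 32 \<beta> 32 \<beta>] by simp
  then have C1: "C \<ge> 2" using C_def by (simp add: power2_eq_square)
  have n0: "real n \<ge> 2" using n2 by simp
  define q where "q = real n / L^2"
  have gK: "q \<ge> (real t+3)^2" "q \<ge> 16*\<beta>^2" using g by (auto simp: L_def \<beta>_def q_def)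
  have "(real t + 3)^2 \<ge> 1" by (rule one_le_power) simp
  then have q1: "q \<ge> 1" using gK(1) by linarith
  define M where "M = C * real n^2 / L^2"
  have Mq: "M = real n * (C * q)" by (simp add: M_def q_def power2_eq_square)
  have Cq: "C * q \<ge> 2" using C1 q1 mult_mono[of 2 C 1 q] by simp
  have Cq2: "C * q \<ge> q" using C1 q1 mult_right_mono[of 1 C q] by simp
  have M2n: "M \<ge> 2 * real n" using Mq Cq n0 mult_left_mono[of 2 "C*q" "real n"] by simp
  have "1 * (C*q) \<le> real n * (C*q)" by (rule mult_right_mono) (use n0 Cq in auto)
  then have Mq2: "M \<ge> q" using Mq Cq2 by linarith
  have M1: "M \<ge> 1" using Mq2 q1 by simp
  define N where "N = nat \<lceil>M\<rceil>"
  have NM: "real N \<ge> M" "real N \<le> M + 1" using M1 unfolding N_def by linarith+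
  have N0: "N > 0" using NM M1 by simp
  define s where "s = sqrt (real N)"
  have s0: "s > 0" using N0 s_def by simp
  have s_sq: "s^2 = real N" using s_def by simp
  have s1: "s \<ge> real t + 3"
  proof -
    have "(real t + 3)^2 \<le> real N" using gK(1) Mq2 NM(1) by linarith
    then have "sqrt ((real t + 3)^2) \<le> sqrt (real N)" by (rule real_sqrt_le_mono)
    moreover have "sqrt ((real t + 3)^2) = real t + 3" by simp
    ultimately show ?thesis using s_def by linarith
  qed
  have s2: "s \<ge> 4 * \<beta>"
  proof -
    have "(4*\<beta>)^2 \<le> real N" using gK(2) Mq2 NM(1) by (simp add: power_mult_distrib)
    then have "sqrt ((4*\<beta>)^2) \<le> sqrt (real N)" by (rule real_sqrt_le_mono)
    moreover have "sqrt ((4*\<beta>)^2) = 4*\<beta>" using b0 by (subst real_sqrt_abs) simp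
    ultimately show ?thesis using s_def by linarith
  qed
  have s3: "s \<ge> 12 * \<beta> * real n / L"
  proof -
    have "M = (12 * \<beta> * real n / L)^2" by (simp add: M_def C_def power_mult_distrib power_divide)
    then have "(12 * \<beta> * real n / L)^2 \<le> real N" using NM(1) by linarith
    then have "sqrt ((12 * \<beta> * real n / L)^2) \<le> sqrt (real N)" by (rule real_sqrt_le_mono)
    moreover have "sqrt ((12 * \<beta> * real n / L)^2) = 12 * \<beta> * real n / L" using b0 L0 n0 by (subst real_sqrt_abs) simp
    ultimately show ?thesis using s_def by linarith
  qed
  define sq where "sq = nat \<lceil>sqrt (real t * real N)\<rceil>"
  define d1 where "d1 = sq + t + 2"
  have sq_lo: "real sq \<ge> sqrt (real t * real N)" unfolding sq_def by linarith
  have sq_eq: "real sq = real_of_int \<lceil>sqrt (real t * real N)\<rceil>" unfolding sq_def by simp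
  have sq_hi: "real sq \<le> sqrt (real t * real N) + 1" unfolding sq_eq by (rule of_int_ceiling_le_add_one)
  have dd: "(d1 - 1 - t) * d1 > t * N"
  proof -
    have e: "d1 - 1 - t = sq + 1" using d1_def by simp
    have "sqrt (real t * real N) < real sq + 1" using sq_lo by simp
    then have "(sqrt (real t * real N))^2 < (real sq + 1)^2" by (intro power_strict_mono) auto
    then have "real t * real N < (real sq + 1)^2" by simp
    also have "\<dots> \<le> (real sq + 1) * (real sq + real t + 2)" by (simp add: power2_eq_square)
    finally have "real t * real N < (real sq + 1) * (real sq + real t + 2)" .
    then have "real (t * N) < real ((sq + 1) * (sq + t + 2))" by (simp only: of_nat_mult of_nat_add of_nat_1 of_nat_numeral)
    then show ?thesis using e d1_def by (simp only: of_nat_less_iff)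
  qed
  have d1t: "d1 > t + 1" using d1_def by simp
  have sqt: "sqrt (real t) \<le> real t"
  proof -
    have "sqrt (real t) \<le> sqrt (real t ^ 2)" using t2 by (intro real_sqrt_le_mono) (simp add: power2_eq_square)
    then show ?thesis by simp
  qed
  have d1b: "real d1 \<le> 2 * real t * s"
  proof -
    have "sqrt (real t * real N) = sqrt (real t) * s" by (simp add: s_def real_sqrt_mult)
    also have "\<dots> \<le> real t * s" using sqt s0 by (intro mult_right_mono) auto
    finally have "real d1 \<le> real t * s + real t + 3" using sq_hi d1_def by simp
    also have "\<dots> \<le> real t * s + s" using s1 by simp
    also have "\<dots> \<le> 2 * real t * s" using t2 s0 by (simp add: algebra_simps)
    finally show ?thesis .
  qed
  have Db: "real (4*k*d1) \<le> \<beta> * s"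
  proof -
    have "real (4*k*d1) = 4 * real k * real d1" by simp
    also have "\<dots> \<le> 4 * real k * (2 * real t * s)" using d1b by (intro mult_left_mono) auto
    also have "\<dots> = \<beta> * s" by (simp add: \<beta>_def)
    finally show ?thesis .
  qed
  define x where "x = 2 * real (4*k*d1) / real N"
  have x0: "x \<ge> 0" using x_def by simp
  have xle: "x \<le> 2 * \<beta> / s"
  proof -
    have "x = 2 * real (4*k*d1) / s^2" using x_def s_sq by simp
    also have "\<dots> \<le> 2 * (\<beta> * s) / s^2" using Db s0 by (intro divide_right_mono mult_left_mono) simp_all
    also have "\<dots> = 2 * \<beta> / s" using s0 by (simp add: power2_eq_square)
    finally show ?thesis .
  qed
  have xh: "x \<le> 1/2"
  proof -
    have "2 * \<beta> / s \<le> 2 * \<beta> / (4 * \<beta>)" using s2 b0 by (intro divide_left_mono) auto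
    also have "\<dots> = 1/2" using b0 by simp
    finally show ?thesis using xle by simp
  qed
  have DN: "2 * real (4*k*d1) \<le> real N"
  proof -
    have "2 * real (4*k*d1) = x * real N" using x_def N0 by simp
    also have "\<dots> \<le> 1 * real N" using xh by (intro mult_right_mono) auto
    also have "\<dots> = real N" by simp
    finally show ?thesis .
  qed
  have nN: "2 * n \<le> N" using M2n NM(1) by linarith
  have big: "real N / 2 * (1 - 2 * real (4*k*d1) / N)^n \<ge> real n"
  proof -
    have p: "(1 - x)^n \<ge> exp (- 3 * x * n)" using pow_exp_bound[OF x0 xh] by simp
    have "3 * x * real n \<le> 3 * (2 * \<beta> / s) * real n" using xle n0 by (intro mult_right_mono) auto
    also have "\<dots> = 6 * \<beta> * real n / s" by simp
    also have "\<dots> \<le> 6 * \<beta> * real n / (12 * \<beta> * real n / L)" proof (rule divide_left_mono[OF s3])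
      show "0 \<le> 6 * \<beta> * real n" using b0 n0 by simp
      have pos: "12 * \<beta> * real n / L > 0" using b0 n0 L0 by simp
      show "0 < s * (12 * \<beta> * real n / L)" using mult_pos_pos[OF s0 pos] .
    qed
    also have "\<dots> = L / 2" using b0 n0 by (simp add: field_simps)
    finally have "exp (- 3 * x * n) \<ge> exp (- (L / 2))" by simp
    also have "exp (- (L / 2)) = 1 / sqrt (real n)"
    proof -
      have "sqrt (real n) = real n powr (1/2)" using n0 by (simp add: powr_half_sqrt)
      also have "\<dots> = exp (L / 2)" using n0 by (simp add: powr_def L_def)
      finally show ?thesis by (simp add: exp_minus field_simps)
    qed
    finally have p2: "(1 - x)^n \<ge> 1 / sqrt (real n)" using p by simp
    have sn: "sqrt (real n) > 0" using n0 by simp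
    have hL: "L^2 \<le> sqrt (real n)" using h sn by (simp add: L_def field_simps)
    have "real N / 2 * (1 - x)^n \<ge> M / 2 * (1 / sqrt (real n))"
      using NM(1) p2 M1 by (intro mult_mono) auto
    also have "M / 2 * (1 / sqrt (real n)) = C * real n^2 / (2 * L^2 * sqrt (real n))" by (simp add: M_def)
    also have "\<dots> \<ge> C * real n^2 / (2 * sqrt (real n) * sqrt (real n))"
    proof (rule divide_left_mono)
      show "2 * L^2 * sqrt (real n) \<le> 2 * sqrt (real n) * sqrt (real n)"
        using mult_right_mono[OF hL, of "sqrt (real n)"] sn by simp
      show "0 \<le> C * real n^2" using C1 by simp
      have "2 * L^2 * sqrt (real n) > 0" using L0 sn by simp
      moreover have "2 * sqrt (real n) * sqrt (real n) > 0" using sn by simp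
      ultimately show "0 < 2 * sqrt (real n) * sqrt (real n) * (2 * L^2 * sqrt (real n))" by (simp only: mult_pos_pos)
    qed
    also have "C * real n^2 / (2 * sqrt (real n) * sqrt (real n)) = C * real n / 2" using n0 by (simp add: power2_eq_square)
    also have "C * real n / 2 \<ge> real n" using C1 n0 by simp
    finally show ?thesis using x_def by simp
  qed
  have P: "\<forall>col. (\<forall>i<N. \<forall>j<N. col i j \<in> {1..k+1}) \<longrightarrow>
      (\<exists>c\<in>{1..k}. has_mono_cycle N col c t) \<or> has_mono_Knn N col (k + 1) n"
    using goodN[OF t2 _ N0 dd d1t DN nN big] k2 by simp
  have "br_cycle_Knn k t n \<le> N" unfolding br_cycle_Knn_def by (rule Least_le) (rule P)
  then have "real (br_cycle_Knn k t n) \<le> M + 1" using NM(2) by linarith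
  also have "\<dots> \<le> 2 * M" using M1 by simp
  also have "\<dots> = 2*(144*(8*real k*real t)^2) * real n^2 / ln (real n)^2" by (simp add: M_def C_def \<beta>_def L_def)
  finally show ?thesis .
qed


theorem theorem2:
  fixes t k :: nat
  assumes "t \<ge> 2" and "k \<ge> 2"
  shows "\<exists>c :: real. c > 0 \<and>
    (\<forall>\<^sub>F n in sequentially. real (br_cycle_Knn k t n) \<le> c * real n ^ 2 / (ln (real n)) ^ 2)"
proof (rule exI[of _ "2*(144*(8*real k*real t)^2)"], rule conjI)
  show "2*(144*(8*real k*real t)^2) > (0::real)" using assms by simp
  show "\<forall>\<^sub>F n in sequentially. real (br_cycle_Knn k t n) \<le> 2*(144*(8*real k*real t)^2) * real n ^ 2 / (ln (real n)) ^ 2"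
    using ev_conds[of "max ((real t + 3)^2) (16 * (8*real k*real t)^2)"]
  proof eventually_elim
    case (elim n)
    then show ?case using bound_n[OF assms(1) assms(2)] by blast
  qed
qed

end
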